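(* Let $X \in \{0,1\}$ be a binary random variable and let $Y_x$ be a real-valued random variable (a potential outcome). Suppose that for each $x' \in \{0,1\}$ the conditional distribution of $Y_x$ given $X = x'$ has a cdf that is strictly increasing and continuous on its support. Let $\underline{y}_x$ and $\overline{y}_x$ (possibly $-\infty$ and $+\infty$) denote the lower and upper endpoints of the support of $Y_x$, and let $p(y_x) = \Pr(X=1 \mid Y_x = y_x)$. Let $\mathcal{T} \subseteq \mathbb{R}$. Then $Y_x$ is $\mathcal{T}$-independent of $X$ if and only if \[ \mathbb{E}\big( p(Y_x) \mid Y_x \in (t_1,t_2) \big) = \Pr(X=1) \] for all $t_1, t_2 \in \mathcal{T} \cup \{\underline{y}_x, \overline{y}_x\}$ with $t_1 < t_2$.
   Context: $Y_x$ is called $\mathcal{T}$-independent of $X$ if $F_{Y_x\mid X}(\tau \mid 0) = F_{Y_x \mid X}(\tau \mid 1)$ for all $\tau \in \mathcal{T}$, where $F_{Y_x\mid X}(\cdot\mid x')$ is the conditional cdf of $Y_x$ given $X=x'$. The function $p$ is called the latent propensity score. *)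

theory Defs
  imports "HOL-Probability.Probability"
begin

definition X_event :: "'a measure \<Rightarrow> ('a \<Rightarrow> real) \<Rightarrow> real \<Rightarrow> 'a set" where
  "X_event M X x = {\<omega> \<in> space M. X \<omega> = x}"

definition cond_cdf :: "'a measure \<Rightarrow> ('a \<Rightarrow> real) \<Rightarrow> ('a \<Rightarrow> real) \<Rightarrow> real \<Rightarrow> real \<Rightarrow> real" where
  "cond_cdf M X Y x \<tau> =
     measure M {\<omega> \<in> space M. Y \<omega> \<le> \<tau> \<and> X \<omega> = x} / measure M (X_event M X x)"

definition T_independent :: "'a measure \<Rightarrow> ('a \<Rightarrow> real) \<Rightarrow> ('a \<Rightarrow> real) \<Rightarrow> real set \<Rightarrow> bool" where
  "T_independent M X Y T \<longleftrightarrow> (\<forall>\<tau>\<in>T. cond_cdf M X Y 0 \<tau> = cond_cdf M X Y 1 \<tau>)"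

definition dist_support :: "'a measure \<Rightarrow> ('a \<Rightarrow> real) \<Rightarrow> real set" where
  "dist_support M Y = {y. \<forall>e>0. measure M {\<omega> \<in> space M. Y \<omega> \<in> ball y e} > 0}"

definition cond_support :: "'a measure \<Rightarrow> ('a \<Rightarrow> real) \<Rightarrow> ('a \<Rightarrow> real) \<Rightarrow> real \<Rightarrow> real set" where
  "cond_support M X Y x =
     {y. \<forall>e>0. measure M {\<omega> \<in> space M. Y \<omega> \<in> ball y e \<and> X \<omega> = x} > 0}"

definition supp_lower :: "'a measure \<Rightarrow> ('a \<Rightarrow> real) \<Rightarrow> ereal" where
  "supp_lower M Y = Inf (ereal ` dist_support M Y)"

definition supp_upper :: "'a measure \<Rightarrow> ('a \<Rightarrow> real) \<Rightarrow> ereal" where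
  "supp_upper M Y = Sup (ereal ` dist_support M Y)"

text \<open>p is (a version of) the latent propensity score p(y) = Pr(X = 1 | Y = y):
  a Borel function with p(Y) integrable and
  E[p(Y) 1{Y \<in> B}] = Pr(X = 1, Y \<in> B) for every Borel set B.\<close>
definition latent_pscore :: "'a measure \<Rightarrow> ('a \<Rightarrow> real) \<Rightarrow> ('a \<Rightarrow> real) \<Rightarrow> (real \<Rightarrow> real) \<Rightarrow> bool" where
  "latent_pscore M X Y p \<longleftrightarrow>
     p \<in> borel_measurable borel \<and> (\<forall>y. 0 \<le> p y \<and> p y \<le> 1) \<and>
     integrable M (\<lambda>\<omega>. p (Y \<omega>)) \<and>
     (\<forall>B \<in> sets borel.
        (\<integral>\<omega>. indicator {\<omega> \<in> space M. Y \<omega> \<in> B} \<omega> * p (Y \<omega>) \<partial>M)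
          = measure M {\<omega> \<in> space M. X \<omega> = 1 \<and> Y \<omega> \<in> B})"

definition cond_exp_event :: "'a measure \<Rightarrow> ('a \<Rightarrow> real) \<Rightarrow> 'a set \<Rightarrow> real" where
  "cond_exp_event M f A = (\<integral>\<omega>. indicator A \<omega> * f \<omega> \<partial>M) / measure M A"

definition Y_in_open :: "'a measure \<Rightarrow> ('a \<Rightarrow> real) \<Rightarrow> ereal \<Rightarrow> ereal \<Rightarrow> 'a set" where
  "Y_in_open M Y t1 t2 = {\<omega> \<in> space M. t1 < ereal (Y \<omega>) \<and> ereal (Y \<omega>) < t2}"

end

theory Submission
  imports Defs
begin

context prob_space begin

lemma atom_zero:
  assumes Y[measurable]: "Y \<in> borel_measurable M" and X[measurable]: "X \<in> borel_measurable M"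
    and pos: "measure M (X_event M X x) > 0"
    and cont: "\<forall>a\<in>cond_support M X Y x. isCont (cond_cdf M X Y x) a"
  shows "measure M {\<omega>\<in>space M. Y \<omega> = a \<and> X \<omega> = x} = 0"
proof (rule ccontr)
  let ?A = "{\<omega>\<in>space M. Y \<omega> = a \<and> X \<omega> = x}"
  let ?P = "measure M (X_event M X x)"
  assume "measure M ?A \<noteq> 0"
  hence Apos: "measure M ?A > 0" using measure_nonneg[of M ?A] by linarith
  define \<delta> where "\<delta> = measure M ?A / ?P"
  have dpos: "\<delta> > 0" unfolding \<delta>_def using Apos pos by simp
  have "a \<in> cond_support M X Y x"
    unfolding cond_support_def
  proof (intro CollectI allI impI)
    fix e :: real assume "e > 0"
    have "measure M ?A \<le> measure M {\<omega> \<in> space M. Y \<omega> \<in> ball a e \<and> X \<omega> = x}"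
      by (rule finite_measure_mono) (use \<open>e>0\<close> in auto)
    then show "measure M {\<omega> \<in> space M. Y \<omega> \<in> ball a e \<and> X \<omega> = x} > 0" using Apos by linarith
  qed
  hence "isCont (cond_cdf M X Y x) a" using cont by blast
  then obtain d where d: "d > 0" "\<forall>t. t \<noteq> a \<and> dist t a < d \<longrightarrow> dist (cond_cdf M X Y x t) (cond_cdf M X Y x a) < \<delta>"
    unfolding isCont_def using metric_LIM_D dpos by blast
  define t where "t = a - d/2"
  have ta: "t < a" "t \<noteq> a" "dist t a < d" using d by (auto simp: t_def dist_real_def)
  have "{\<omega>\<in>space M. Y \<omega> \<le> a \<and> X \<omega> = x} = {\<omega>\<in>space M. Y \<omega> \<le> t \<and> X \<omega> = x} \<union> ?A
        \<union> {\<omega>\<in>space M. t < Y \<omega> \<and> Y \<omega> < a \<and> X \<omega> = x}" using ta by auto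
  hence "measure M {\<omega>\<in>space M. Y \<omega> \<le> a \<and> X \<omega> = x} \<ge> measure M ({\<omega>\<in>space M. Y \<omega> \<le> t \<and> X \<omega> = x} \<union> ?A)"
    by (intro finite_measure_mono) auto
  moreover have "measure M ({\<omega>\<in>space M. Y \<omega> \<le> t \<and> X \<omega> = x} \<union> ?A) =
     measure M {\<omega>\<in>space M. Y \<omega> \<le> t \<and> X \<omega> = x} + measure M ?A"
    by (rule finite_measure_Union) (use ta in auto)
  ultimately have "cond_cdf M X Y x a - cond_cdf M X Y x t \<ge> \<delta>"
    unfolding cond_cdf_def \<delta>_def using pos by (simp add: diff_divide_distrib[symmetric] divide_right_mono)
  moreover have "dist (cond_cdf M X Y x t) (cond_cdf M X Y x a) < \<delta>" using d ta by blast
  ultimately show False by (simp add: dist_real_def)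
qed

lemma null_region:
  assumes Y[measurable]: "Y \<in> borel_measurable M"
    and ns: "\<And>y. y \<in> S \<Longrightarrow> y \<notin> dist_support M Y" and S: "open S"
  shows "measure M {\<omega>\<in>space M. Y \<omega> \<in> S} = 0"
proof -
  define F where "F = {ball y e | y e. y \<in> S \<and> e > 0 \<and> measure M {\<omega>\<in>space M. Y \<omega> \<in> ball y e} = 0}"
  have "\<And>B. B \<in> F \<Longrightarrow> open B" unfolding F_def by auto
  then obtain F' where F': "F' \<subseteq> F" "countable F'" "\<Union>F' = \<Union>F" using Lindelof by metis
  have cov: "S \<subseteq> \<Union>F"
  proof
    fix y assume "y \<in> S"
    then obtain e where e: "e > 0" "\<not> measure M {\<omega>\<in>space M. Y \<omega> \<in> ball y e} > 0"
      using ns unfolding dist_support_def by blast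
    hence "measure M {\<omega>\<in>space M. Y \<omega> \<in> ball y e} = 0" using measure_nonneg[of M] by (meson not_less order_antisym)
    hence "ball y e \<in> F" unfolding F_def using \<open>y \<in> S\<close> e by blast
    thus "y \<in> \<Union>F" using e(1) by (meson UnionI centre_in_ball)
  qed
  have "(\<Union>B\<in>F'. {\<omega>\<in>space M. Y \<omega> \<in> B}) \<in> null_sets M"
  proof (rule null_sets_UN')
    show "countable F'" by fact
    fix B assume "B \<in> F'"
    then obtain y e where B: "B = ball y e" "measure M {\<omega>\<in>space M. Y \<omega> \<in> ball y e} = 0"
      using F' unfolding F_def by blast
    show "{\<omega>\<in>space M. Y \<omega> \<in> B} \<in> null_sets M"
      using B by (intro null_setsI) (auto simp: emeasure_eq_measure)
  qed
  moreover have "{\<omega>\<in>space M. Y \<omega> \<in> S} \<subseteq> (\<Union>B\<in>F'. {\<omega>\<in>space M. Y \<omega> \<in> B})"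
    using cov F'(3) by blast
  moreover have Sb[measurable]: "S \<in> sets borel" using S by simp
  moreover have "{\<omega>\<in>space M. Y \<omega> \<in> S} \<in> sets M" by measurable
  ultimately have "{\<omega>\<in>space M. Y \<omega> \<in> S} \<in> null_sets M" using null_sets_subset by blast
  thus ?thesis by (simp add: measure_def null_setsD1)
qed

lemma null_of_zero: "A \<in> sets M \<Longrightarrow> prob A = 0 \<Longrightarrow> A \<in> null_sets M"
  by (intro null_setsI) (auto simp: emeasure_eq_measure)

end

theorem theorem1:
  fixes M :: "'a measure" and X Y :: "'a \<Rightarrow> real" and p :: "real \<Rightarrow> real"
    and T :: "real set"
  assumes "prob_space M"
    and "X \<in> borel_measurable M" and "Y \<in> borel_measurable M"
    and "\<forall>\<omega>\<in>space M. X \<omega> \<in> {0, 1}"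
    and "measure M (X_event M X 0) > 0" and "measure M (X_event M X 1) > 0"
    and "\<forall>x\<in>{0, 1}. \<forall>a\<in>cond_support M X Y x. \<forall>b\<in>cond_support M X Y x.
           a < b \<longrightarrow> cond_cdf M X Y x a < cond_cdf M X Y x b"
    and "\<forall>x\<in>{0, 1}. \<forall>a\<in>cond_support M X Y x. isCont (cond_cdf M X Y x) a"
    and "latent_pscore M X Y p"
  shows "T_independent M X Y T \<longleftrightarrow>
    (\<forall>t1 t2. t1 \<in> ereal ` T \<union> {supp_lower M Y, supp_upper M Y}
        \<and> t2 \<in> ereal ` T \<union> {supp_lower M Y, supp_upper M Y}
        \<and> t1 < t2 \<and> measure M (Y_in_open M Y t1 t2) > 0
      \<longrightarrow> cond_exp_event M (\<lambda>\<omega>. p (Y \<omega>)) (Y_in_open M Y t1 t2) = measure M (X_event M X 1))"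
proof -
  interpret prob_space M by fact
  note [measurable] = assms(2,3)
  have X01: "\<And>\<omega>. \<omega> \<in> space M \<Longrightarrow> X \<omega> = 0 \<or> X \<omega> = 1" using assms(4) by auto
  define \<pi> where "\<pi> = prob (X_event M X 1)"
  define G where "G = (\<lambda>t::ereal. prob {\<omega>\<in>space M. X \<omega> = 1 \<and> ereal (Y \<omega>) \<le> t})"
  define F where "F = (\<lambda>t::ereal. prob {\<omega>\<in>space M. ereal (Y \<omega>) \<le> t})"
  define H where "H = (\<lambda>t. G t - \<pi> * F t)"
  have Xev[measurable]: "X_event M X x \<in> sets M" for x unfolding X_event_def by measurable
  have atom: "prob {\<omega>\<in>space M. Y \<omega> = a} = 0" for a
  proof -
    have 0: "prob {\<omega>\<in>space M. Y \<omega> = a \<and> X \<omega> = 0} = 0"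
      by (rule atom_zero) (use assms in auto)
    have 1: "prob {\<omega>\<in>space M. Y \<omega> = a \<and> X \<omega> = 1} = 0"
      by (rule atom_zero) (use assms in auto)
    have "{\<omega>\<in>space M. Y \<omega> = a} = {\<omega>\<in>space M. Y \<omega> = a \<and> X \<omega> = 0} \<union> {\<omega>\<in>space M. Y \<omega> = a \<and> X \<omega> = 1}"
      using X01 by auto
    hence "prob {\<omega>\<in>space M. Y \<omega> = a} \<le> prob {\<omega>\<in>space M. Y \<omega> = a \<and> X \<omega> = 0} + prob {\<omega>\<in>space M. Y \<omega> = a \<and> X \<omega> = 1}"
      by (simp add: measure_subadditive)
    thus ?thesis using 0 1 measure_nonneg[of M] by (metis add.right_neutral order_antisym)
  qed
  have atom1: "prob {\<omega>\<in>space M. X \<omega> = 1 \<and> Y \<omega> = a} = 0" for a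
  proof -
    have "prob {\<omega>\<in>space M. X \<omega> = 1 \<and> Y \<omega> = a} \<le> prob {\<omega>\<in>space M. Y \<omega> = a}"
      by (rule finite_measure_mono) auto
    thus ?thesis using atom[of a] measure_nonneg[of M] by (metis order_antisym)
  qed
  have lt_le: "prob {\<omega>\<in>space M. ereal (Y \<omega>) < t} = F t \<and> prob {\<omega>\<in>space M. X \<omega> = 1 \<and> ereal (Y \<omega>) < t} = G t" for t
  proof (cases t)
    case (real r)
    have n1: "{\<omega>\<in>space M. Y \<omega> = r} \<in> null_sets M" by (rule null_of_zero) (auto simp: atom)
    have n2: "{\<omega>\<in>space M. X \<omega> = 1 \<and> Y \<omega> = r} \<in> null_sets M" by (rule null_of_zero) (auto simp: atom1)
    have e1: "{\<omega>\<in>space M. ereal (Y \<omega>) \<le> t} = {\<omega>\<in>space M. ereal (Y \<omega>) < t} \<union> {\<omega>\<in>space M. Y \<omega> = r}"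
      using real by auto
    have e2: "{\<omega>\<in>space M. X \<omega> = 1 \<and> ereal (Y \<omega>) \<le> t} = {\<omega>\<in>space M. X \<omega> = 1 \<and> ereal (Y \<omega>) < t} \<union> {\<omega>\<in>space M. X \<omega> = 1 \<and> Y \<omega> = r}"
      using real by auto
    show ?thesis unfolding F_def G_def e1 e2
      by (intro conjI measure_Un_null_set[symmetric] n1 n2) measurable
  qed (simp_all add: F_def G_def)
  have interval: "prob (Y_in_open M Y t1 t2) = F t2 - F t1 \<and>
      prob {\<omega>\<in>space M. X \<omega> = 1 \<and> t1 < ereal (Y \<omega>) \<and> ereal (Y \<omega>) < t2} = G t2 - G t1"
    if "t1 < t2" for t1 t2
  proof
    have "Y_in_open M Y t1 t2 = {\<omega>\<in>space M. ereal (Y \<omega>) < t2} - {\<omega>\<in>space M. ereal (Y \<omega>) \<le> t1}"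
      unfolding Y_in_open_def using that by auto
    also have "prob \<dots> = F t2 - F t1"
      by (subst finite_measure_Diff) (use that lt_le in \<open>auto simp: F_def\<close>)
    finally show "prob (Y_in_open M Y t1 t2) = F t2 - F t1" .
    have "{\<omega>\<in>space M. X \<omega> = 1 \<and> t1 < ereal (Y \<omega>) \<and> ereal (Y \<omega>) < t2} =
       {\<omega>\<in>space M. X \<omega> = 1 \<and> ereal (Y \<omega>) < t2} - {\<omega>\<in>space M. X \<omega> = 1 \<and> ereal (Y \<omega>) \<le> t1}"
      using that by auto
    also have "prob \<dots> = G t2 - G t1"
      by (subst finite_measure_Diff) (use that lt_le in \<open>auto simp: G_def\<close>)
    finally show "prob {\<omega>\<in>space M. X \<omega> = 1 \<and> t1 < ereal (Y \<omega>) \<and> ereal (Y \<omega>) < t2} = G t2 - G t1" .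
  qed
  have cexp: "cond_exp_event M (\<lambda>\<omega>. p (Y \<omega>)) (Y_in_open M Y t1 t2) =
     prob {\<omega>\<in>space M. X \<omega> = 1 \<and> t1 < ereal (Y \<omega>) \<and> ereal (Y \<omega>) < t2} / prob (Y_in_open M Y t1 t2)" for t1 t2
  proof -
    define B where "B = {y. t1 < ereal y \<and> ereal y < t2}"
    have "{y\<in>space borel. t1 < ereal y \<and> ereal y < t2} \<in> sets borel" by measurable
    hence B: "B \<in> sets borel" unfolding B_def by simp
    have "(\<integral>\<omega>. indicator {\<omega> \<in> space M. Y \<omega> \<in> B} \<omega> * p (Y \<omega>) \<partial>M)
          = measure M {\<omega> \<in> space M. X \<omega> = 1 \<and> Y \<omega> \<in> B}"
      using assms(9) B unfolding latent_pscore_def by blast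
    moreover have "{\<omega> \<in> space M. Y \<omega> \<in> B} = Y_in_open M Y t1 t2"
      unfolding B_def Y_in_open_def by auto
    moreover have "{\<omega> \<in> space M. X \<omega> = 1 \<and> Y \<omega> \<in> B} = {\<omega>\<in>space M. X \<omega> = 1 \<and> t1 < ereal (Y \<omega>) \<and> ereal (Y \<omega>) < t2}"
      unfolding B_def by auto
    ultimately show ?thesis unfolding cond_exp_event_def by simp
  qed
  have pisum: "prob (X_event M X 0) + \<pi> = 1"
  proof -
    have "space M = X_event M X 0 \<union> X_event M X 1" using X01 unfolding X_event_def by auto
    moreover have "prob (X_event M X 0 \<union> X_event M X 1) = prob (X_event M X 0) + prob (X_event M X 1)"
      by (rule finite_measure_Union) (auto simp: X_event_def)
    ultimately have "prob (space M) = prob (X_event M X 0) + prob (X_event M X 1)" by simp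
    thus ?thesis using prob_space \<pi>_def by simp
  qed
  have pipos: "0 < \<pi>" "\<pi> < 1" using pisum assms(5,6) \<pi>_def by auto
  have GF: "0 \<le> G t" "G t \<le> F t" "G t \<le> \<pi>" "F t \<le> 1" for t
    unfolding G_def F_def \<pi>_def X_event_def
    by (auto intro!: finite_measure_mono)
  have Hinf: "H \<infinity> = 0" "H (-\<infinity>) = 0"
  proof -
    have "{\<omega> \<in> space M. X \<omega> = 1 \<and> ereal (Y \<omega>) \<le> \<infinity>} = X_event M X 1" unfolding X_event_def by auto
    moreover have "{\<omega> \<in> space M. ereal (Y \<omega>) \<le> \<infinity>} = space M" by auto
    ultimately show "H \<infinity> = 0" unfolding H_def G_def F_def \<pi>_def using prob_space by simp
    show "H (-\<infinity>) = 0" unfolding H_def G_def F_def by simp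
  qed
  have lower: "F (ereal r) = 0" if "ereal r \<le> supp_lower M Y" for r
  proof -
    have "prob {\<omega>\<in>space M. Y \<omega> \<in> {..<r}} = 0"
    proof (rule null_region)
      fix y assume "y \<in> {..<r}"
      show "y \<notin> dist_support M Y"
      proof
        assume "y \<in> dist_support M Y"
        hence "supp_lower M Y \<le> ereal y" unfolding supp_lower_def by (auto intro: Inf_lower)
        from order_trans[OF that this] show False using \<open>y \<in> {..<r}\<close> by auto
      qed
    qed auto
    thus ?thesis using lt_le[of "ereal r"] by simp
  qed
  have upper: "F (ereal r) = 1 \<and> G (ereal r) = \<pi>" if "supp_upper M Y \<le> ereal r" for r
  proof -
    have z: "prob {\<omega>\<in>space M. Y \<omega> \<in> {r<..}} = 0"
    proof (rule null_region)
      fix y assume "y \<in> {r<..}"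
      show "y \<notin> dist_support M Y"
      proof
        assume "y \<in> dist_support M Y"
        hence "ereal y \<le> supp_upper M Y" unfolding supp_upper_def by (auto intro: Sup_upper)
        from order_trans[OF this that] show False using \<open>y \<in> {r<..}\<close> by auto
      qed
    qed auto
    have "{\<omega>\<in>space M. ereal (Y \<omega>) \<le> ereal r} = space M - {\<omega>\<in>space M. Y \<omega> \<in> {r<..}}" by auto
    hence F1: "F (ereal r) = 1" unfolding F_def using z prob_space
      by (simp add: finite_measure_Diff)
    have "{\<omega>\<in>space M. X \<omega> = 1 \<and> ereal (Y \<omega>) \<le> ereal r} = X_event M X 1 - {\<omega>\<in>space M. X \<omega> = 1 \<and> Y \<omega> \<in> {r<..}}"
      unfolding X_event_def by auto
    hence "G (ereal r) = \<pi> - prob {\<omega>\<in>space M. X \<omega> = 1 \<and> Y \<omega> \<in> {r<..}}"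
      unfolding G_def \<pi>_def by (simp only:, subst finite_measure_Diff) (auto simp: X_event_def)
    moreover have "prob {\<omega>\<in>space M. X \<omega> = 1 \<and> Y \<omega> \<in> {r<..}} \<le> prob {\<omega>\<in>space M. Y \<omega> \<in> {r<..}}"
      by (rule finite_measure_mono) auto
    ultimately have "G (ereal r) \<ge> \<pi> - prob {\<omega>\<in>space M. Y \<omega> \<in> {r<..}}" by simp
    thus ?thesis using F1 z GF[of "ereal r"] by simp
  qed
  have Hl: "H (supp_lower M Y) = 0"
  proof (cases "supp_lower M Y")
    case (real r)
    hence "F (ereal r) = 0" using lower by simp
    thus ?thesis using real GF[of "ereal r"] unfolding H_def by simp
  qed (use Hinf in auto)
  have Hu: "H (supp_upper M Y) = 0"
  proof (cases "supp_upper M Y")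
    case (real r)
    thus ?thesis using upper[of r] unfolding H_def by simp
  qed (use Hinf in auto)
  have Tind: "T_independent M X Y T \<longleftrightarrow> (\<forall>\<tau>\<in>T. H (ereal \<tau>) = 0)"
  proof -
    have c0: "cond_cdf M X Y 0 \<tau> = (F (ereal \<tau>) - G (ereal \<tau>)) / (1 - \<pi>)" for \<tau>
    proof -
      have "{\<omega> \<in> space M. Y \<omega> \<le> \<tau> \<and> X \<omega> = 0} = {\<omega>\<in>space M. ereal (Y \<omega>) \<le> ereal \<tau>} - {\<omega>\<in>space M. X \<omega> = 1 \<and> ereal (Y \<omega>) \<le> ereal \<tau>}"
        using X01 by auto
      hence "prob {\<omega> \<in> space M. Y \<omega> \<le> \<tau> \<and> X \<omega> = 0} = F (ereal \<tau>) - G (ereal \<tau>)"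
        unfolding F_def G_def by (simp add: finite_measure_Diff subset_iff)
      moreover have "prob (X_event M X 0) = 1 - \<pi>" using pisum by simp
      ultimately show ?thesis unfolding cond_cdf_def by simp
    qed
    have c1: "cond_cdf M X Y 1 \<tau> = G (ereal \<tau>) / \<pi>" for \<tau>
      unfolding cond_cdf_def G_def \<pi>_def by (simp add: conj_commute)
    have "(F t - G t) / (1 - \<pi>) = G t / \<pi> \<longleftrightarrow> H t = 0" for t
      using pipos unfolding H_def by (simp add: field_simps) (auto simp: algebra_simps)
    thus ?thesis unfolding T_independent_def c0 c1 by simp
  qed
  have K: "prob {\<omega>\<in>space M. X \<omega> = 1 \<and> t1 < ereal (Y \<omega>) \<and> ereal (Y \<omega>) < t2} - \<pi> * prob (Y_in_open M Y t1 t2)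
     = H t2 - H t1" if "t1 < t2" for t1 t2
    using interval[OF that] unfolding H_def by (simp add: right_diff_distrib)
  show ?thesis
  proof
    assume T: "T_independent M X Y T"
    have H0: "H t = 0" if "t \<in> ereal ` T \<union> {supp_lower M Y, supp_upper M Y}" for t
      using that T Tind Hl Hu by auto
    show "\<forall>t1 t2. t1 \<in> ereal ` T \<union> {supp_lower M Y, supp_upper M Y}
        \<and> t2 \<in> ereal ` T \<union> {supp_lower M Y, supp_upper M Y}
        \<and> t1 < t2 \<and> measure M (Y_in_open M Y t1 t2) > 0
      \<longrightarrow> cond_exp_event M (\<lambda>\<omega>. p (Y \<omega>)) (Y_in_open M Y t1 t2) = measure M (X_event M X 1)"
    proof (intro allI impI)
      fix t1 t2 assume a: "t1 \<in> ereal ` T \<union> {supp_lower M Y, supp_upper M Y}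
        \<and> t2 \<in> ereal ` T \<union> {supp_lower M Y, supp_upper M Y}
        \<and> t1 < t2 \<and> measure M (Y_in_open M Y t1 t2) > 0"
      hence "prob {\<omega>\<in>space M. X \<omega> = 1 \<and> t1 < ereal (Y \<omega>) \<and> ereal (Y \<omega>) < t2} = \<pi> * prob (Y_in_open M Y t1 t2)"
        using K[of t1 t2] H0[of t1] H0[of t2] by simp
      thus "cond_exp_event M (\<lambda>\<omega>. p (Y \<omega>)) (Y_in_open M Y t1 t2) = measure M (X_event M X 1)"
        using a unfolding cexp \<pi>_def by simp
    qed
  next
    assume C: "\<forall>t1 t2. t1 \<in> ereal ` T \<union> {supp_lower M Y, supp_upper M Y}
        \<and> t2 \<in> ereal ` T \<union> {supp_lower M Y, supp_upper M Y}
        \<and> t1 < t2 \<and> measure M (Y_in_open M Y t1 t2) > 0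
      \<longrightarrow> cond_exp_event M (\<lambda>\<omega>. p (Y \<omega>)) (Y_in_open M Y t1 t2) = measure M (X_event M X 1)"
    have "H (ereal \<tau>) = 0" if "\<tau> \<in> T" for \<tau>
    proof (cases "supp_lower M Y < ereal \<tau>")
      case True
      let ?A = "Y_in_open M Y (supp_lower M Y) (ereal \<tau>)"
      let ?B = "{\<omega>\<in>space M. X \<omega> = 1 \<and> supp_lower M Y < ereal (Y \<omega>) \<and> ereal (Y \<omega>) < ereal \<tau>}"
      have "prob ?B = \<pi> * prob ?A"
      proof (cases "prob ?A > 0")
        case True
        hence "cond_exp_event M (\<lambda>\<omega>. p (Y \<omega>)) ?A = \<pi>"
          using C \<open>supp_lower M Y < ereal \<tau>\<close> that unfolding \<pi>_def by blast
        thus ?thesis using True unfolding cexp by (simp add: field_simps)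
      next
        case False
        hence A0: "prob ?A = 0" using measure_nonneg[of M ?A] by linarith
        have "prob ?B \<le> prob ?A" unfolding Y_in_open_def by (rule finite_measure_mono) auto
        thus ?thesis using A0 measure_nonneg[of M ?B] by (simp only: mult_zero_right)
      qed
      thus ?thesis using K[OF True] Hl by simp
    next
      case False
      hence "F (ereal \<tau>) = 0" using lower by simp
      thus ?thesis using GF[of "ereal \<tau>"] unfolding H_def by simp
    qed
    thus "T_independent M X Y T" using Tind by simp
  qed
qed

end
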